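(* Let $(Q,d)$ be a compact metric space, $p_0:Q\to[0,+\infty]$ a function which is not identically $+\infty$, $f$ a nonnegative Radon measure on $Q$, and take the transportation cost $c(x,y)=d(x,y)$. Consider the problem of maximizing $$F(p)=\int_Q\Big(\max_{y\in T_p(x)}p(y)\Big)\,df(x)$$ over $\mathcal A=\{p:Q\to\overline{\mathbb{R}}\ :\ p\le p_0 \text{ on } Q,\ p\text{ lower semicontinuous}\}$. Then an optimal solution is given by $$p_{opt}(x)=\max\big\{p(x)\ :\ p\in\mathrm{Lip}_{1,d}(Q),\ p\le p_0\big\}.$$
   Context: For $p\in\mathcal A$ and $x\in Q$: $v_p(x)=\min_{y\in Q}\{d(x,y)+p(y)\}$ and $T_p(x)=\{y\in Q\ :\ d(x,y)+p(y)=v_p(x)\}$. $\mathrm{Lip}_{1,d}(Q)$ denotes the class of functions on $Q$ that are Lipschitz with respect to $d$ with Lipschitz constant at most $1$. *)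

theory Defs
  imports "HOL-Analysis.Analysis"
begin

definition lsc_on :: "'a::metric_space set \<Rightarrow> ('a \<Rightarrow> ereal) \<Rightarrow> bool" where
  "lsc_on Q p \<longleftrightarrow> (\<forall>x\<in>Q. \<forall>c. c < p x \<longrightarrow> (\<forall>\<^sub>F y in at x within Q. c < p y))"

definition admissible :: "'a::metric_space set \<Rightarrow> ('a \<Rightarrow> ereal) \<Rightarrow> ('a \<Rightarrow> ereal) set" where
  "admissible Q p0 = {p. (\<forall>x\<in>Q. p x \<le> p0 x) \<and> lsc_on Q p}"

definition vfun :: "'a::metric_space set \<Rightarrow> ('a \<Rightarrow> ereal) \<Rightarrow> 'a \<Rightarrow> ereal" where
  "vfun Q p x = (INF y\<in>Q. ereal (dist x y) + p y)"

definition Tset :: "'a::metric_space set \<Rightarrow> ('a \<Rightarrow> ereal) \<Rightarrow> 'a \<Rightarrow> 'a set" where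
  "Tset Q p x = {y\<in>Q. ereal (dist x y) + p y = vfun Q p x}"

definition gfun :: "'a::metric_space set \<Rightarrow> ('a \<Rightarrow> ereal) \<Rightarrow> 'a \<Rightarrow> ereal" where
  "gfun Q p x = (SUP y\<in>Tset Q p x. p y)"

definition Ffun :: "'a::metric_space set \<Rightarrow> 'a measure \<Rightarrow> ('a \<Rightarrow> ereal) \<Rightarrow> ereal" where
  "Ffun Q f p = enn2ereal (\<integral>\<^sup>+ x. e2ennreal (gfun Q p x) \<partial>f)
                - enn2ereal (\<integral>\<^sup>+ x. e2ennreal (- gfun Q p x) \<partial>f)"

definition popt :: "'a::metric_space set \<Rightarrow> ('a \<Rightarrow> ereal) \<Rightarrow> 'a \<Rightarrow> ereal" where
  "popt Q p0 x = (SUP p\<in>{p :: 'a \<Rightarrow> real. 1-lipschitz_on Q p \<and> (\<forall>y\<in>Q. ereal (p y) \<le> p0 y)}. ereal (p x))"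

end

theory Submission
  imports Defs
begin

lemma V_nonneg:
  assumes "\<forall>x\<in>Q. 0 \<le> p0 x"
  shows "0 \<le> vfun Q p0 x"
  unfolding vfun_def using assms by (auto intro!: INF_greatest add_nonneg_nonneg)

lemma V_fin:
  assumes "x0 \<in> Q" "p0 x0 \<noteq> \<infinity>" "\<forall>x\<in>Q. 0 \<le> p0 x"
  shows "vfun Q p0 x \<noteq> \<infinity>"
proof -
  have "vfun Q p0 x \<le> ereal (dist x x0) + p0 x0"
    unfolding vfun_def using assms by (intro INF_lower) auto
  moreover have "ereal (dist x x0) + p0 x0 \<noteq> \<infinity>" using assms
    by (cases "p0 x0") auto
  ultimately show ?thesis by (metis ereal_infty_less_eq(1))
qed

lemma V_le: "x \<in> Q \<Longrightarrow> vfun Q p x \<le> ereal (dist x z) + p z" if "z \<in> Q"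
  unfolding vfun_def using that by (intro INF_lower) auto

lemma V_tri:
  assumes "x \<in> Q" "y \<in> Q" "\<forall>x\<in>Q. 0 \<le> p0 x"
    and fx: "vfun Q p0 x = ereal a"
  shows "ereal (a - dist x y) \<le> vfun Q p0 y"
  unfolding vfun_def
proof (rule INF_greatest)
  fix z assume z: "z \<in> Q"
  have "ereal a \<le> ereal (dist x z) + p0 z" using V_le[OF z assms(1), of p0] fx by simp
  moreover have "dist x z \<le> dist x y + dist y z" by (rule dist_triangle)
  ultimately show "ereal (a - dist x y) \<le> ereal (dist y z) + p0 z"
    by (cases "p0 z") auto
qed

theorem theorem3p1:
  fixes Q :: "'a::metric_space set" and p0 :: "'a \<Rightarrow> ereal" and f :: "'a measure"
  assumes "compact Q"
    and "\<forall>x\<in>Q. 0 \<le> p0 x"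
    and "\<exists>x\<in>Q. p0 x \<noteq> \<infinity>"
    and "space f = Q" and "sets f = sets (restrict_space borel Q)"
    and "finite_measure f"
  shows "(\<forall>x\<in>Q. \<exists>p :: 'a \<Rightarrow> real. 1-lipschitz_on Q p \<and> (\<forall>y\<in>Q. ereal (p y) \<le> p0 y)
                    \<and> ereal (p x) = popt Q p0 x)
       \<and> popt Q p0 \<in> admissible Q p0
       \<and> (\<forall>p\<in>admissible Q p0. Ffun Q f p \<le> Ffun Q f (popt Q p0))"
proof -
  obtain x0 where x0: "x0 \<in> Q" "p0 x0 \<noteq> \<infinity>" using assms(3) by blast
  define q where "q x = real_of_ereal (vfun Q p0 x)" for x
  have qV: "ereal (q x) = vfun Q p0 x" for x
    using V_nonneg[OF assms(2), of x] V_fin[OF x0 assms(2), of x] unfolding q_def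
    by (cases "vfun Q p0 x") auto
  have qnn: "0 \<le> q x" for x using V_nonneg[OF assms(2), of x] qV[of x] by (metis ereal_less_eq(5) zero_ereal_def)
  have tri: "q x - dist x y \<le> q y" if "x \<in> Q" "y \<in> Q" for x y
    using V_tri[OF that assms(2) qV[symmetric, of x]] qV[of y] by (metis ereal_less_eq(3))
  have lip: "1-lipschitz_on Q q"
  proof (rule lipschitz_onI)
    fix x y assume "x \<in> Q" "y \<in> Q"
    then show "dist (q x) (q y) \<le> 1 * dist x y"
      using tri[of x y] tri[of y x] by (simp add: dist_real_def dist_commute abs_le_iff)
  qed simp
  have qle: "ereal (q y) \<le> p0 y" if "y \<in> Q" for y
    using V_le[OF that that, of p0] qV[of y] by simp
  have cls: "ereal (p x) \<le> vfun Q p0 x" if "1-lipschitz_on Q p" "\<forall>y\<in>Q. ereal (p y) \<le> p0 y" "x \<in> Q"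
    for p :: "'a \<Rightarrow> real" and x
    unfolding vfun_def
  proof (rule INF_greatest)
    fix z assume z: "z \<in> Q"
    have "p x \<le> p z + dist x z" using lipschitz_onD[OF that(1) that(3) z]
      by (simp add: dist_real_def)
    then have "ereal (p x) \<le> ereal (dist x z) + ereal (p z)" by simp
    also have "\<dots> \<le> ereal (dist x z) + p0 z" using that(2) z by (intro add_left_mono) auto
    finally show "ereal (p x) \<le> ereal (dist x z) + p0 z" .
  qed
  have popt_eq: "popt Q p0 x = ereal (q x)" if "x \<in> Q" for x
    unfolding popt_def
  proof (rule antisym)
    show "(SUP p\<in>{p. 1-lipschitz_on Q p \<and> (\<forall>y\<in>Q. ereal (p y) \<le> p0 y)}. ereal (p x)) \<le> ereal (q x)"
      using cls that qV by (auto intro!: SUP_least)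
    show "ereal (q x) \<le> (SUP p\<in>{p. 1-lipschitz_on Q p \<and> (\<forall>y\<in>Q. ereal (p y) \<le> p0 y)}. ereal (p x))"
      using lip qle by (intro SUP_upper) auto
  qed
  have P1: "\<forall>x\<in>Q. \<exists>p :: 'a \<Rightarrow> real. 1-lipschitz_on Q p \<and> (\<forall>y\<in>Q. ereal (p y) \<le> p0 y)
                    \<and> ereal (p x) = popt Q p0 x"
    using lip qle popt_eq by metis
  have contq: "continuous_on Q q" using lip by (rule lipschitz_on_continuous_on)
  have lsc: "lsc_on Q (popt Q p0)"
    unfolding lsc_on_def
  proof (intro ballI allI impI)
    fix x c assume x: "x \<in> Q" and c: "c < popt Q p0 x"
    have inQ: "\<forall>\<^sub>F y in at x within Q. y \<in> Q"
      by (simp add: eventually_at_filter)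
    show "\<forall>\<^sub>F y in at x within Q. c < popt Q p0 y"
    proof (cases c)
      case (real r)
      have "r < q x" using c popt_eq[OF x] real by simp
      moreover have "(q \<longlongrightarrow> q x) (at x within Q)"
        using contq x by (simp add: continuous_on_def)
      ultimately have "\<forall>\<^sub>F y in at x within Q. r < q y" by (rule order_tendstoD(1)[rotated])
      then show ?thesis using inQ
        by eventually_elim (simp add: popt_eq real)
    next
      case PInf then show ?thesis using c by simp
    next
      case MInf show ?thesis by (rule eventually_mono[OF inQ]) (simp add: popt_eq MInf)
    qed
  qed
  have P2: "popt Q p0 \<in> admissible Q p0"
    unfolding admissible_def using lsc qle popt_eq by auto
  have gq: "ereal (q x) \<le> gfun Q (popt Q p0) x" if x: "x \<in> Q" for x
  proof -
    have "vfun Q (popt Q p0) x = ereal (q x)"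
    proof (rule antisym)
      show "vfun Q (popt Q p0) x \<le> ereal (q x)"
        using V_le[OF x x, of "popt Q p0"] popt_eq[OF x] by simp
      show "ereal (q x) \<le> vfun Q (popt Q p0) x"
        unfolding vfun_def
      proof (rule INF_greatest)
        fix y assume y: "y \<in> Q"
        have "q x \<le> dist x y + q y" using tri[OF x y] by simp
        then show "ereal (q x) \<le> ereal (dist x y) + popt Q p0 y" using popt_eq[OF y] by simp
      qed
    qed
    then have "x \<in> Tset Q (popt Q p0) x" unfolding Tset_def using x popt_eq[OF x] by simp
    then show ?thesis unfolding gfun_def using popt_eq[OF x] by (metis SUP_upper)
  qed
  have gp: "gfun Q p x \<le> ereal (q x)" if p: "p \<in> admissible Q p0" and x: "x \<in> Q" for p x
    unfolding gfun_def
  proof (rule SUP_least)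
    fix y assume y: "y \<in> Tset Q p x"
    then have yQ: "y \<in> Q" and eq: "ereal (dist x y) + p y = vfun Q p x" unfolding Tset_def by auto
    have "vfun Q p x \<le> vfun Q p0 x"
      unfolding vfun_def using p unfolding admissible_def
      by (intro INF_mono) (auto intro!: add_left_mono)
    moreover have "p y \<le> ereal (dist x y) + p y"
      by (metis add_increasing ereal_less_eq(5) order_refl zero_le_dist)
    ultimately show "p y \<le> ereal (q x)" using eq qV[of x] by simp
  qed
  have P3: "Ffun Q f p \<le> Ffun Q f (popt Q p0)" if p: "p \<in> admissible Q p0" for p
  proof -
    let ?A = "\<integral>\<^sup>+ x. e2ennreal (gfun Q p x) \<partial>f"
    let ?B = "\<integral>\<^sup>+ x. e2ennreal (- gfun Q p x) \<partial>f"
    let ?A' = "\<integral>\<^sup>+ x. e2ennreal (gfun Q (popt Q p0) x) \<partial>f"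
    let ?B' = "\<integral>\<^sup>+ x. e2ennreal (- gfun Q (popt Q p0) x) \<partial>f"
    have "?A \<le> ?A'"
    proof (rule nn_integral_mono)
      fix x assume "x \<in> space f"
      then have x: "x \<in> Q" using assms(4) by simp
      show "e2ennreal (gfun Q p x) \<le> e2ennreal (gfun Q (popt Q p0) x)"
        using gp[OF p x] gq[OF x] by (intro e2ennreal_mono) simp
    qed
    then have AA: "enn2ereal ?A \<le> enn2ereal ?A'" by (simp add: less_eq_ennreal.rep_eq)
    have "?B' = (\<integral>\<^sup>+ x. 0 \<partial>f)"
    proof (rule nn_integral_cong)
      fix x assume "x \<in> space f"
      then have x: "x \<in> Q" using assms(4) by simp
      have "0 \<le> gfun Q (popt Q p0) x" using gq[OF x] qnn[of x] by (meson ereal_less_eq(5) order_trans)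
      then show "e2ennreal (- gfun Q (popt Q p0) x) = 0" by (intro e2ennreal_neg) simp
    qed
    then have B0: "?B' = 0" by simp
    have "enn2ereal ?A - enn2ereal ?B \<le> enn2ereal ?A"
    proof -
      have "0 \<le> enn2ereal ?B" by simp
      then show ?thesis by (cases "enn2ereal ?A"; cases "enn2ereal ?B") auto
    qed
    also have "\<dots> \<le> enn2ereal ?A' - enn2ereal ?B'" using AA B0 by (simp add: zero_ennreal.rep_eq)
    finally show ?thesis unfolding Ffun_def .
  qed
  show ?thesis using P1 P2 P3 by blast
qed

end
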